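(* Let $m,n,s,k,c$ be positive integers such that $nc$ is even and $k$ is odd. If $\Gamma$ is an abelian group of order $nkc$ having exactly one involution, then there is no $\mathrm{MRS}_\Gamma(m,n;s,k;c)$.
   Context: For positive integers $m,n,s,k,c$ and an abelian group $\Gamma$ of order $nkc$, an $\mathrm{MRS}_\Gamma(m,n;s,k;c)$ is a set of $c$ partially filled $m\times n$ arrays (some cells may be empty) with entries in $\Gamma$ such that: every element of $\Gamma$ appears exactly once and in a unique array; in every array each row contains exactly $s$ filled cells and each column contains exactly $k$ filled cells; and there exist $\omega,\delta\in\Gamma$ such that in every array the sum of the entries of each row is $\omega$ and the sum of the entries of each column is $\delta$. An involution is an element of order $2$. *)

theory Defs
  imports Main
begin

definition involution :: "'a::ab_group_add \<Rightarrow> bool" where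
  "involution x \<longleftrightarrow> x \<noteq> 0 \<and> x + x = 0"

text \<open>A family of c partially filled m x n arrays over the group 'a is encoded as
  A t i j (t < c array index, i < m row, j < n column); None = empty cell.
  MRS m n s k c A: the arrays form an MRS_Gamma(m,n;s,k;c), Gamma being the
  (finite) group 'a (its order n*k*c is required separately).\<close>
definition MRS :: "nat \<Rightarrow> nat \<Rightarrow> nat \<Rightarrow> nat \<Rightarrow> nat \<Rightarrow>
    (nat \<Rightarrow> nat \<Rightarrow> nat \<Rightarrow> 'a::ab_group_add option) \<Rightarrow> bool" where
  "MRS m n s k c A \<longleftrightarrow>
     (\<forall>g::'a. card {(t, i, j). t < c \<and> i < m \<and> j < n \<and> A t i j = Some g} = 1) \<and>
     (\<forall>t<c. \<forall>i<m. card {j. j < n \<and> A t i j \<noteq> None} = s) \<and>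
     (\<forall>t<c. \<forall>j<n. card {i. i < m \<and> A t i j \<noteq> None} = k) \<and>
     (\<exists>\<omega> \<delta>.
        (\<forall>t<c. \<forall>i<m. (\<Sum>j\<in>{j. j < n \<and> A t i j \<noteq> None}. the (A t i j)) = \<omega>) \<and>
        (\<forall>t<c. \<forall>j<n. (\<Sum>i\<in>{i. i < m \<and> A t i j \<noteq> None}. the (A t i j)) = \<delta>))"

end

theory Submission
  imports Defs
begin

fun nsm :: "nat \<Rightarrow> 'a::ab_group_add \<Rightarrow> 'a" where
  "nsm 0 x = 0"
| "nsm (Suc n) x = x + nsm n x"

lemma nsm_add: "nsm (a + b) x = nsm a x + nsm b x"
  by (induction a) (auto simp: add.assoc)

lemma nsm_mult: "nsm (a * b) x = nsm a (nsm b x)"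
  by (induction a) (auto simp: nsm_add)

lemma nsm_plus: "nsm n (x + y) = nsm n x + nsm n y"
  by (induction n) (auto simp: algebra_simps)

lemma nsm_invol: "x + x = 0 \<Longrightarrow> nsm k x = (if odd k then x else 0)"
  by (induction k) (auto simp: add.assoc)

lemma sum_const_nsm: "finite A \<Longrightarrow> (\<Sum>_\<in>A. x) = nsm (card A) x"
  by (induction A rule: finite_induct) auto

lemma lagrange:
  fixes x :: "'a::{ab_group_add,finite}"
  shows "nsm (card (UNIV::'a set)) x = 0"
proof -
  have b: "bij_betw (\<lambda>y. x + y) UNIV (UNIV::'a set)"
    by (rule bij_betw_byWitness[where f'="\<lambda>y. y - x"]) auto
  have "(\<Sum>y\<in>UNIV. x + y) = (\<Sum>y\<in>(UNIV::'a set). y)"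
    using sum.reindex_bij_betw[OF b, of "\<lambda>y. y"] by simp
  moreover have "(\<Sum>y\<in>UNIV. x + y) = (\<Sum>y\<in>(UNIV::'a set). x) + (\<Sum>y\<in>(UNIV::'a set). y)"
    by (simp add: sum.distrib)
  ultimately show ?thesis using sum_const_nsm[of "UNIV::'a set" x] by simp
qed

lemma sum_pairs_zero:
  fixes R :: "'a::ab_group_add set"
  shows "finite R \<Longrightarrow> (\<forall>x\<in>R. -x \<in> R \<and> -x \<noteq> x) \<Longrightarrow> sum (\<lambda>y. y) R = 0"
proof (induction R rule: finite_psubset_induct)
  case (psubset R)
  show ?case
  proof (cases "R = {}")
    case True then show ?thesis by simp
  next
    case False
    then obtain x where x: "x \<in> R" by blast
    let ?R' = "R - {x, -x}"
    have sub: "?R' \<subset> R" using x by blast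
    have p: "\<forall>y\<in>?R'. -y \<in> ?R' \<and> -y \<noteq> y" using psubset.prems by auto
    have IH: "sum (\<lambda>y. y) ?R' = 0" using psubset.IH[OF sub p] .
    have nx: "-x \<in> R" "-x \<noteq> x" using psubset.prems x by auto
    have R: "R = insert x (insert (-x) ?R')" using x nx by blast
    have "sum (\<lambda>y. y) R = x + (-x + sum (\<lambda>y. y) ?R')"
      apply (subst R) using nx psubset.hyps by (simp add: sum.insert_remove)
    then show ?thesis using IH by simp
  qed
qed

lemma sum_univ_invol:
  fixes \<iota> :: "'a::{ab_group_add,finite}"
  assumes "involution \<iota>" "\<And>x. involution x \<Longrightarrow> x = \<iota>"
  shows "sum (\<lambda>y. y) (UNIV::'a set) = \<iota>"
proof -
  let ?R = "UNIV - {0, \<iota>}"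
  have i: "\<iota> \<noteq> 0" "\<iota> + \<iota> = 0" using assms(1) by (auto simp: involution_def)
  have mi: "-\<iota> = \<iota>" using i(2) by (metis add_eq_0_iff)
  have "\<forall>x\<in>?R. -x \<in> ?R \<and> -x \<noteq> x"
  proof
    fix x assume x: "x \<in> ?R"
    have "-x \<noteq> x"
    proof
      assume "-x = x"
      then have "x + x = 0" by (metis add.right_inverse)
      then have "x = \<iota>" using assms(2) x by (auto simp: involution_def)
      then show False using x by simp
    qed
    moreover have "-x \<noteq> 0" "-x \<noteq> \<iota>" using x mi by (auto simp: minus_equation_iff)
    ultimately show "-x \<in> ?R \<and> -x \<noteq> x" by simp
  qed
  then have R0: "sum (\<lambda>y. y) ?R = 0" by (intro sum_pairs_zero) auto
  have U: "(UNIV::'a set) = {0, \<iota>} \<union> ?R" by blast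
  have "sum (\<lambda>y. y) (UNIV::'a set) = sum (\<lambda>y. y) {0, \<iota>} + sum (\<lambda>y. y) ?R"
    by (subst U, rule sum.union_disjoint) auto
  then show ?thesis using R0 i by simp
qed

theorem lemma3p6:
  fixes m n s k c :: nat
  assumes "m > 0" "n > 0" "s > 0" "k > 0" "c > 0"
    and "even (n * c)" and "odd k"
    and "card (UNIV :: 'a::{ab_group_add, finite} set) = n * k * c"
    and "\<exists>!x::'a. involution x"
  shows "\<not> (\<exists>A :: nat \<Rightarrow> nat \<Rightarrow> nat \<Rightarrow> 'a option. MRS m n s k c A)"
proof
  assume "\<exists>A :: nat \<Rightarrow> nat \<Rightarrow> nat \<Rightarrow> 'a option. MRS m n s k c A"
  then obtain A :: "nat \<Rightarrow> nat \<Rightarrow> nat \<Rightarrow> 'a option" where M: "MRS m n s k c A" by blast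
  obtain \<iota> :: 'a where io: "involution \<iota>" "\<And>x. involution x \<Longrightarrow> x = \<iota>" using assms(9) by blast
  have one: "\<And>g. card {(t, i, j). t < c \<and> i < m \<and> j < n \<and> A t i j = Some g} = 1"
    using conjunct1[OF M[unfolded MRS_def]] by blast
  obtain \<omega> \<delta> where col: "\<And>t j. t < c \<Longrightarrow> j < n \<Longrightarrow>
      (\<Sum>i\<in>{i. i < m \<and> A t i j \<noteq> None}. the (A t i j)) = \<delta>"
    using conjunct2[OF conjunct2[OF conjunct2[OF M[unfolded MRS_def]]]] by blast
  define T where "T = {(t, i, j). t < c \<and> i < m \<and> j < n \<and> A t i j \<noteq> None}"
  define f where "f = (\<lambda>(t, i, j). the (A t i j))"
  have bij: "bij_betw f T (UNIV::'a set)"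
    unfolding bij_betw_def
  proof
    show "inj_on f T"
    proof (rule inj_onI)
      fix p q assume p: "p \<in> T" and q: "q \<in> T" and e: "f p = f q"
      obtain t i j where pp: "p = (t, i, j)" by (cases p) auto
      obtain t' i' j' where qq: "q = (t', i', j')" by (cases q) auto
      define S where "S = {(t, i, j). t < c \<and> i < m \<and> j < n \<and> A t i j = Some (f p)}"
      have "p \<in> S"
        using p pp unfolding T_def f_def S_def by auto
      moreover have "q \<in> S"
        using q qq e unfolding T_def f_def S_def by auto
      moreover obtain a where "S = {a}" using one[of "f p"] unfolding S_def[symmetric]
        by (rule card_1_singletonE)
      ultimately show "p = q" by simp
    qed
  next
    show "f ` T = UNIV"
    proof (rule set_eqI, rule iffI)
      fix g :: 'a
      assume "g \<in> UNIV"
      define S where "S = {(t, i, j). t < c \<and> i < m \<and> j < n \<and> A t i j = Some g}"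
      obtain a where a: "S = {a}" using one[of g] unfolding S_def[symmetric]
        by (rule card_1_singletonE)
      obtain t i j where aa: "a = (t, i, j)" by (cases a) auto
      have "a \<in> S" using a by simp
      then have "t < c \<and> i < m \<and> j < n \<and> A t i j = Some g" unfolding S_def aa by simp
      then have "a \<in> T" "f a = g" unfolding T_def f_def aa by auto
      then show "g \<in> f ` T" by (metis imageI)
    qed auto
  qed
  have S1: "sum (\<lambda>y. y) (UNIV::'a set) = sum f T"
    using sum.reindex_bij_betw[OF bij, of "\<lambda>y. y"] by simp
  define C where "C = (\<lambda>t j. {i. i < m \<and> A t i j \<noteq> None})"
  define h where "h = (\<lambda>(t::nat, j::nat, i::nat). (t, i, j))"
  have TS: "T = h ` (SIGMA t:{..<c}. SIGMA j:{..<n}. C t j)"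
  proof
    show "h ` (SIGMA t:{..<c}. SIGMA j:{..<n}. C t j) \<subseteq> T"
      unfolding T_def h_def C_def by auto
  next
    show "T \<subseteq> h ` (SIGMA t:{..<c}. SIGMA j:{..<n}. C t j)"
    proof
      fix x assume x: "x \<in> T"
      obtain t i j where xx: "x = (t, i, j)" by (cases x) auto
      have "(t, j, i) \<in> (SIGMA t:{..<c}. SIGMA j:{..<n}. C t j)"
        using x unfolding xx T_def C_def by simp
      moreover have "x = h (t, j, i)" unfolding xx h_def by simp
      ultimately show "x \<in> h ` (SIGMA t:{..<c}. SIGMA j:{..<n}. C t j)" by (metis imageI)
    qed
  qed
  have ih: "inj_on h (SIGMA t:{..<c}. SIGMA j:{..<n}. C t j)"
    unfolding h_def by (auto simp: inj_on_def)
  have fin: "\<And>t j. finite (C t j)" unfolding C_def by auto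
  have "sum f T = (\<Sum>(t, j, i)\<in>(SIGMA t:{..<c}. SIGMA j:{..<n}. C t j). the (A t i j))"
    unfolding TS by (subst sum.reindex[OF ih]) (simp add: h_def f_def case_prod_beta)
  also have "\<dots> = (\<Sum>t<c. \<Sum>(j, i)\<in>(SIGMA j:{..<n}. C t j). the (A t i j))"
    by (subst sum.Sigma[symmetric]) (auto simp: fin case_prod_beta)
  also have "\<dots> = (\<Sum>t<c. \<Sum>j<n. \<Sum>i\<in>C t j. the (A t i j))"
    by (rule sum.cong, simp, subst sum.Sigma[symmetric]) (auto simp: fin case_prod_beta)
  also have "\<dots> = (\<Sum>t<c. \<Sum>j<n. \<delta>)"
    using col unfolding C_def by simp
  also have "\<dots> = nsm c (nsm n \<delta>)" by (simp add: sum_const_nsm)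
  finally have "sum (\<lambda>y. y) (UNIV::'a set) = nsm (c * n) \<delta>" using S1 by (simp add: nsm_mult)
  then have eq: "\<iota> = nsm (c * n) \<delta>" using sum_univ_invol[OF io] by simp
  have "nsm k \<iota> = nsm (card (UNIV::'a set)) \<delta>"
    using eq assms(8) by (simp add: nsm_mult[symmetric] mult.commute mult.left_commute)
  also have "\<dots> = 0" by (rule lagrange)
  finally have "nsm k \<iota> = 0" .
  moreover have "nsm k \<iota> = \<iota>" using nsm_invol[of \<iota> k] io(1) assms(7) by (simp add: involution_def)
  ultimately show False using io(1) by (simp add: involution_def)
qed

end
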